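(* Let $G=\langle a,s,t \mid a^2=1,\ [a,a^t]=1,\ [s,t]=1,\ a^s=aa^t\rangle$. Then in $G$: (i) $[a^{t^i},a^{t^j}]=1$ for all $i,j\in\mathbb Z$; (ii) $[a^{s^i},a^{t^j}]=1$ for all integers $i<0$ and all $j\in\mathbb Z$; (iii) $[a^{s^i},a^{s^j}]=1$ for all integers $i,j<0$.
   Context: Notation: $[x,y]=x^{-1}y^{-1}xy$ and $x^y=y^{-1}xy$. *)

theory Defs
  imports "HOL-Algebra.Group"
begin

definition gconj :: "('a, 'b) monoid_scheme \<Rightarrow> 'a \<Rightarrow> 'a \<Rightarrow> 'a" where
  "gconj G x y = inv\<^bsub>G\<^esub> y \<otimes>\<^bsub>G\<^esub> x \<otimes>\<^bsub>G\<^esub> y"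

definition gcomm :: "('a, 'b) monoid_scheme \<Rightarrow> 'a \<Rightarrow> 'a \<Rightarrow> 'a" where
  "gcomm G x y = inv\<^bsub>G\<^esub> x \<otimes>\<^bsub>G\<^esub> inv\<^bsub>G\<^esub> y \<otimes>\<^bsub>G\<^esub> x \<otimes>\<^bsub>G\<^esub> y"

end

theory Submission
  imports Defs
begin

context group begin

lemma gcomm_iff: "x \<in> carrier G \<Longrightarrow> y \<in> carrier G \<Longrightarrow> gcomm G x y = \<one> \<longleftrightarrow> x \<otimes> y = y \<otimes> x"
proof -
  assume x: "x \<in> carrier G" and y: "y \<in> carrier G"
  have "gcomm G x y = inv (y \<otimes> x) \<otimes> (x \<otimes> y)"
    using x y by (simp add: gcomm_def inv_mult_group m_assoc)
  also have "\<dots> = \<one> \<longleftrightarrow> x \<otimes> y = y \<otimes> x"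
  proof
    assume "inv (y \<otimes> x) \<otimes> (x \<otimes> y) = \<one>"
    then have "inv (x \<otimes> y) = inv (y \<otimes> x)" using x y by (intro inv_equality) auto
    then show "x \<otimes> y = y \<otimes> x" using x y by (metis inv_inv m_closed)
  next
    assume "x \<otimes> y = y \<otimes> x"
    then show "inv (y \<otimes> x) \<otimes> (x \<otimes> y) = \<one>" using x y by simp
  qed
  finally show ?thesis by simp
qed

lemma rinv_assoc: "x \<in> carrier G \<Longrightarrow> g \<in> carrier G \<Longrightarrow> x \<otimes> g \<otimes> inv g = x"
  by (simp add: m_assoc)

lemma cj_mult: "x \<in> carrier G \<Longrightarrow> y \<in> carrier G \<Longrightarrow> g \<in> carrier G \<Longrightarrow> gconj G (x \<otimes> y) g = gconj G x g \<otimes> gconj G y g"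
  by (simp add: gconj_def m_assoc[symmetric] rinv_assoc)

lemma cj_closed[simp]: "x \<in> carrier G \<Longrightarrow> g \<in> carrier G \<Longrightarrow> gconj G x g \<in> carrier G"
  by (simp add: gconj_def)

lemma cj_cj: "x \<in> carrier G \<Longrightarrow> h \<in> carrier G \<Longrightarrow> g \<in> carrier G \<Longrightarrow> gconj G (gconj G x g) h = gconj G x (g \<otimes> h)"
  by (simp add: gconj_def m_assoc inv_mult_group)

lemma cj_one: "x \<in> carrier G \<Longrightarrow> gconj G x \<one> = x"
  by (simp add: gconj_def)

lemma cj_comm: "x \<in> carrier G \<Longrightarrow> y \<in> carrier G \<Longrightarrow> g \<in> carrier G \<Longrightarrow> x \<otimes> y = y \<otimes> x \<Longrightarrow> gconj G x g \<otimes> gconj G y g = gconj G y g \<otimes> gconj G x g"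
  by (simp add: cj_mult[symmetric])

lemma comm_inv:
  assumes x: "x \<in> carrier G" and z: "z \<in> carrier G" and h: "x \<otimes> z = z \<otimes> x"
  shows "x \<otimes> inv z = inv z \<otimes> x"
proof -
  have "inv z \<otimes> x = inv z \<otimes> x \<otimes> (z \<otimes> inv z)" using x z by simp
  also have "\<dots> = inv z \<otimes> (x \<otimes> z) \<otimes> inv z" using x z by (simp add: m_assoc)
  also have "\<dots> = inv z \<otimes> (z \<otimes> x) \<otimes> inv z" by (simp only: h)
  also have "\<dots> = x \<otimes> inv z" using x z by (simp add: m_assoc[symmetric])
  finally show ?thesis by (rule sym)
qed

lemma comm_int_pow: assumes "x \<in> carrier G" "y \<in> carrier G" "x \<otimes> y = y \<otimes> x"
  shows "x \<otimes> y [^] (i::int) = y [^] i \<otimes> x"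
proof (cases i rule: int_cases)
  case (nonneg n)
  then show ?thesis using group_commutes_pow[OF assms(3)[symmetric] assms(2,1)] by (simp add: int_pow_int)
next
  case (neg n)
  have h: "y [^] Suc n \<otimes> x = x \<otimes> y [^] Suc n" using group_commutes_pow[OF assms(3)[symmetric] assms(2,1)] .
  have "x \<otimes> inv (y [^] Suc n) = inv (y [^] Suc n) \<otimes> x"
    using h[symmetric] assms by (intro comm_inv) auto
  moreover have "y [^] i = inv (y [^] Suc n)" using neg assms by (simp add: int_pow_neg_int del: of_nat_Suc)
  ultimately show ?thesis by (simp only:)
qed

lemma key:
  assumes c: "x \<in> carrier G" "x1 \<in> carrier G" "y \<in> carrier G" "y1 \<in> carrier G"
    and h1: "x \<otimes> y = y \<otimes> x" and h2: "x \<otimes> x1 = x1 \<otimes> x" and h3: "y \<otimes> y1 = y1 \<otimes> y"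
    and h4: "x1 \<otimes> y = y \<otimes> x1" and h5: "x1 \<otimes> y1 = y1 \<otimes> x1"
    and h: "(x \<otimes> x1) \<otimes> (y \<otimes> y1) = (y \<otimes> y1) \<otimes> (x \<otimes> x1)"
  shows "x \<otimes> y1 = y1 \<otimes> x"
proof -
  have "(x \<otimes> x1) \<otimes> (y \<otimes> y1) = (x1 \<otimes> x) \<otimes> (y \<otimes> y1)" by (subst h2) (rule refl)
  also have "\<dots> = x1 \<otimes> ((x \<otimes> y) \<otimes> y1)" using c by (simp add: m_assoc)
  also have "\<dots> = x1 \<otimes> ((y \<otimes> x) \<otimes> y1)" by (subst h1) (rule refl)
  also have "\<dots> = x1 \<otimes> (y \<otimes> (x \<otimes> y1))" using c by (simp add: m_assoc)
  finally have L: "(x \<otimes> x1) \<otimes> (y \<otimes> y1) = x1 \<otimes> (y \<otimes> (x \<otimes> y1))" .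
  have "(y \<otimes> y1) \<otimes> (x \<otimes> x1) = (y \<otimes> y1) \<otimes> (x1 \<otimes> x)" by (subst h2) (rule refl)
  also have "\<dots> = y \<otimes> ((y1 \<otimes> x1) \<otimes> x)" using c by (simp add: m_assoc)
  also have "\<dots> = y \<otimes> ((x1 \<otimes> y1) \<otimes> x)" by (subst h5) (rule refl)
  also have "\<dots> = (y \<otimes> x1) \<otimes> (y1 \<otimes> x)" using c by (simp add: m_assoc)
  also have "\<dots> = (x1 \<otimes> y) \<otimes> (y1 \<otimes> x)" by (subst h4) (rule refl)
  also have "\<dots> = x1 \<otimes> (y \<otimes> (y1 \<otimes> x))" using c by (simp add: m_assoc)
  finally have R: "(y \<otimes> y1) \<otimes> (x \<otimes> x1) = x1 \<otimes> (y \<otimes> (y1 \<otimes> x))" .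
  have "x1 \<otimes> (y \<otimes> (x \<otimes> y1)) = x1 \<otimes> (y \<otimes> (y1 \<otimes> x))" using h by (simp only: L R)
  then have "y \<otimes> (x \<otimes> y1) = y \<otimes> (y1 \<otimes> x)" using c by simp
  then show ?thesis using c by simp
qed

end

theorem mainTheorem2:
  fixes G (structure) and a s t :: 'a
  assumes "group G"
    and "a \<in> carrier G" "s \<in> carrier G" "t \<in> carrier G"
    and "a \<otimes> a = \<one>"
    and "gcomm G a (gconj G a t) = \<one>"
    and "gcomm G s t = \<one>"
    and "gconj G a s = a \<otimes> gconj G a t"
  shows "(\<forall>(i::int) (j::int). gcomm G (gconj G a (t [^] i)) (gconj G a (t [^] j)) = \<one>)
       \<and> (\<forall>(i::int) (j::int). i < 0 \<longrightarrow> gcomm G (gconj G a (s [^] i)) (gconj G a (t [^] j)) = \<one>)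
       \<and> (\<forall>(i::int) (j::int). i < 0 \<longrightarrow> j < 0 \<longrightarrow> gcomm G (gconj G a (s [^] i)) (gconj G a (s [^] j)) = \<one>)"
proof -
  interpret group G by fact
  note ca = assms(2) and cs = assms(3) and ct = assms(4)
  define A where "A i = gconj G a (t [^] (i::int))" for i
  have Ac[simp]: "A i \<in> carrier G" for i using ca ct by (simp add: A_def)
  have A0: "A 0 = a" using ca by (simp add: A_def cj_one)
  have A1: "A 1 = gconj G a t" using ct by (simp add: A_def)
  have stc: "s \<otimes> t = t \<otimes> s" using assms(7) cs ct gcomm_iff by simp
  have Ashift: "gconj G (A i) (t [^] k) = A (i + k)" for i k
    using ca ct by (simp add: A_def cj_cj int_pow_mult)
  have As: "gconj G (A i) s = A i \<otimes> A (i + 1)" for i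
  proof -
    have "gconj G (A i) s = gconj G a (t [^] i \<otimes> s)" using ca cs ct by (simp add: A_def cj_cj)
    also have "\<dots> = gconj G a (s \<otimes> t [^] i)" using comm_int_pow[OF cs ct stc] by simp
    also have "\<dots> = gconj G (gconj G a s) (t [^] i)" using ca cs ct by (simp add: cj_cj)
    also have "\<dots> = A i \<otimes> gconj G (A 1) (t [^] i)" using ca cs ct assms(8)
      by (simp add: cj_mult A1 A_def)
    also have "\<dots> = A i \<otimes> A (i + 1)" using Ashift[of 1 i] by (simp add: add.commute)
    finally show ?thesis .
  qed
  have c01: "a \<otimes> gconj G a t = gconj G a t \<otimes> a" using assms(6) ca ct gcomm_iff by simp
  define P where "P n = (\<forall>i. A i \<otimes> A (i + int n) = A (i + int n) \<otimes> A i)" for n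
  have P0: "P 0" by (simp add: P_def)
  have P1: "P 1"
    unfolding P_def
  proof
    fix i :: int
    have c: "A 0 \<otimes> A 1 = A 1 \<otimes> A 0" using c01 by (simp add: A0 A1)
    have "gconj G (A 0) (t [^] i) \<otimes> gconj G (A 1) (t [^] i) = gconj G (A 1) (t [^] i) \<otimes> gconj G (A 0) (t [^] i)"
      by (rule cj_comm[OF Ac Ac _ c]) (simp add: ct)
    then show "A i \<otimes> A (i + int 1) = A (i + int 1) \<otimes> A i" by (simp add: Ashift add.commute)
  qed
  have Pall: "\<forall>k\<le>n. P k" for n
  proof (induction n)
    case 0 then show ?case using P0 by simp
  next
    case (Suc n)
    have "P (Suc n)"
    proof (cases "n = 0")
      case True then show ?thesis using P1 by simp
    next
      case False
      have Pn: "P n" and Pm: "P (n - 1)" using Suc by auto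
      show ?thesis unfolding P_def
      proof
        fix i
        let ?x = "A i" and ?x1 = "A (i + 1)" and ?y = "A (i + int n)" and ?y1 = "A (i + int n + 1)"
        have h1: "?x \<otimes> ?y = ?y \<otimes> ?x" using Pn by (simp add: P_def)
        have h2: "?x \<otimes> ?x1 = ?x1 \<otimes> ?x" using P1 by (simp add: P_def)
        have h3: "?y \<otimes> ?y1 = ?y1 \<otimes> ?y" using P1 unfolding P_def by (metis of_nat_1)
        have "A (i + 1) \<otimes> A (i + 1 + int (n - 1)) = A (i + 1 + int (n - 1)) \<otimes> A (i + 1)"
          using Pm by (simp add: P_def)
        moreover have "i + 1 + int (n - 1) = i + int n" using False by simp
        ultimately have h4: "?x1 \<otimes> ?y = ?y \<otimes> ?x1" by simp
        have "A (i + 1) \<otimes> A (i + 1 + int n) = A (i + 1 + int n) \<otimes> A (i + 1)"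
          using Pn by (simp add: P_def)
        then have h5: "?x1 \<otimes> ?y1 = ?y1 \<otimes> ?x1" by (simp add: ac_simps)
        have "gconj G ?x s \<otimes> gconj G ?y s = gconj G ?y s \<otimes> gconj G ?x s"
          using h1 cs by (intro cj_comm) auto
        then have h: "(?x \<otimes> ?x1) \<otimes> (?y \<otimes> ?y1) = (?y \<otimes> ?y1) \<otimes> (?x \<otimes> ?x1)"
          by (simp add: As)
        have "?x \<otimes> ?y1 = ?y1 \<otimes> ?x" by (rule key[OF _ _ _ _ h1 h2 h3 h4 h5 h]) auto
        then show "A i \<otimes> A (i + int (Suc n)) = A (i + int (Suc n)) \<otimes> A i" by (simp add: ac_simps)
      qed
    qed
    then show ?case using Suc by (auto simp: le_Suc_eq)
  qed
  have partI: "A i \<otimes> A j = A j \<otimes> A i" for i j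
  proof (cases "i \<le> j")
    case True
    have "P (nat (j - i))" using Pall by blast
    then have "A i \<otimes> A (i + int (nat (j - i))) = A (i + int (nat (j - i))) \<otimes> A i" unfolding P_def by blast
    moreover have "i + int (nat (j - i)) = j" using True by simp
    ultimately show ?thesis by simp
  next
    case False
    have "P (nat (i - j))" using Pall by blast
    then have "A j \<otimes> A (j + int (nat (i - j))) = A (j + int (nat (i - j))) \<otimes> A j" unfolding P_def by blast
    moreover have "j + int (nat (i - j)) = i" using False by simp
    ultimately show ?thesis by simp
  qed
  define D where "D = {x \<in> carrier G. \<forall>k. x \<otimes> A k = A k \<otimes> x}"
  have Dmult: "x \<in> D \<Longrightarrow> y \<in> D \<Longrightarrow> x \<otimes> y \<in> D" for x y
  proof -
    assume x: "x \<in> D" and y: "y \<in> D"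
    have xc: "x \<in> carrier G" and yc: "y \<in> carrier G" using x y by (auto simp: D_def)
    { fix k
      have "x \<otimes> y \<otimes> A k = x \<otimes> (y \<otimes> A k)" using xc yc by (simp add: m_assoc)
      also have "\<dots> = x \<otimes> (A k \<otimes> y)" using y by (simp add: D_def)
      also have "\<dots> = (x \<otimes> A k) \<otimes> y" using xc yc by (simp add: m_assoc)
      also have "\<dots> = (A k \<otimes> x) \<otimes> y" using x by (simp add: D_def)
      also have "\<dots> = A k \<otimes> (x \<otimes> y)" using xc yc by (simp add: m_assoc)
      finally have "x \<otimes> y \<otimes> A k = A k \<otimes> (x \<otimes> y)" . }
    then show ?thesis using xc yc by (simp add: D_def)
  qed
  have Q: "gconj G (A j) (s [^] m) \<in> D" for m :: nat and j
  proof (induction m arbitrary: j)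
    case 0 
    have "A j \<in> D" unfolding D_def using partI Ac by blast
    then show ?case by (simp add: cj_one)
  next
    case (Suc m)
    have e: "s [^] Suc m = s \<otimes> s [^] m" by (rule nat_pow_Suc2[OF cs])
    have "gconj G (A j) (s [^] Suc m) = gconj G (A j) (s \<otimes> s [^] m)" by (simp only: e)
    also have "\<dots> = gconj G (gconj G (A j) s) (s [^] m)"
      by (rule cj_cj[symmetric]) (use cs in auto)
    also have "\<dots> = gconj G (A j) (s [^] m) \<otimes> gconj G (A (j + 1)) (s [^] m)"
      unfolding As by (rule cj_mult) (use cs in auto)
    finally show ?case using Suc Dmult by simp
  qed
  have S: "gconj G a (s [^] i) \<in> carrier G" for i :: int using ca cs by simp
  have partII: "gconj G a (s [^] i) \<otimes> A j = A j \<otimes> gconj G a (s [^] i)" if "i < 0" for i j :: int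
  proof -
    define m where "m = nat (- i)"
    have im: "i = - int m" using that by (simp add: m_def)
    have e: "gconj G (A j) (s [^] m) \<otimes> a = a \<otimes> gconj G (A j) (s [^] m)"
      using Q[of j m] unfolding D_def A0[symmetric] by blast
    have pw: "s [^] m \<otimes> s [^] i = \<one>"
      using cs im by (simp add: int_pow_neg_int)
    have "gconj G (gconj G (A j) (s [^] m)) (s [^] i) \<otimes> gconj G a (s [^] i)
        = gconj G a (s [^] i) \<otimes> gconj G (gconj G (A j) (s [^] m)) (s [^] i)"
      by (rule cj_comm[OF _ ca _ e]) (use cs in auto)
    moreover have r: "gconj G (gconj G (A j) (s [^] m)) (s [^] i) = A j" using cs pw by (simp add: cj_cj cj_one)
    ultimately show ?thesis by (simp only: r)
  qed
  have partIII: "gconj G a (s [^] i) \<otimes> gconj G a (s [^] j) = gconj G a (s [^] j) \<otimes> gconj G a (s [^] i)"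
    if "i < j" "j < 0" for i j :: int
  proof -
    have "gconj G a (s [^] (i - j)) \<otimes> A 0 = A 0 \<otimes> gconj G a (s [^] (i - j))"
      using partII that by simp
    then have c: "gconj G a (s [^] (i - j)) \<otimes> a = a \<otimes> gconj G a (s [^] (i - j))" by (simp only: A0)
    have "gconj G (gconj G a (s [^] (i - j))) (s [^] j) \<otimes> gconj G a (s [^] j)
      = gconj G a (s [^] j) \<otimes> gconj G (gconj G a (s [^] (i - j))) (s [^] j)"
      by (rule cj_comm[OF _ ca _ c]) (use ca cs in auto)
    moreover have "gconj G (gconj G a (s [^] (i - j))) (s [^] j) = gconj G a (s [^] i)"
      using ca cs by (simp add: cj_cj int_pow_mult[symmetric])
    ultimately show ?thesis by (simp only:)
  qed
  show ?thesis
  proof (intro conjI allI impI)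
    fix i j :: int
    show "gcomm G (gconj G a (t [^] i)) (gconj G a (t [^] j)) = \<one>"
    proof -
      have "gcomm G (A i) (A j) = \<one>" using gcomm_iff[OF Ac Ac] partI[of i j] by blast
      then show ?thesis by (simp only: A_def)
    qed
  next
    fix i j :: int assume "i < 0"
    then have "gcomm G (gconj G a (s [^] i)) (A j) = \<one>"
      using gcomm_iff[OF S Ac] partII[of i j] by blast
    then show "gcomm G (gconj G a (s [^] i)) (gconj G a (t [^] j)) = \<one>" by (simp only: A_def)
  next
    fix i j :: int assume "i < 0" "j < 0"
    have "gconj G a (s [^] i) \<otimes> gconj G a (s [^] j) = gconj G a (s [^] j) \<otimes> gconj G a (s [^] i)"
    proof (cases "i < j")
      case True then show ?thesis using partIII \<open>j < 0\<close> by blast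
    next
      case False
      show ?thesis
      proof (cases "i = j")
        case True then show ?thesis by simp
      next
        case False2: False
        then have "j < i" using False by simp
        then have "gconj G a (s [^] j) \<otimes> gconj G a (s [^] i) = gconj G a (s [^] i) \<otimes> gconj G a (s [^] j)"
          using partIII[of j i] \<open>i < 0\<close> by blast
        then show ?thesis by (rule sym)
      qed
    qed
    then show "gcomm G (gconj G a (s [^] i)) (gconj G a (s [^] j)) = \<one>"
      using gcomm_iff[OF S S] by blast
  qed
qed

end
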